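(* Under the standing assumptions (A) below, let $\Omega'=\{t\in[0,L]:\tau(t)\ne\pm\lambda\}\cup\Omega$. If $I$ is any connected component of $\Omega'$, then $\tau(I)$ is contained in a great circle of $S^{n-1}$ through $\lambda$.
   Context: Standing assumptions (A): $n\ge2$, $L>0$, $\beta\colon[0,L]\to(0,\infty)$ of bounded variation with $1/\beta$ bounded; $\tau\in W^{1,\infty}((0,L);S^{n-1})$ with $k=\operatorname{ess\,sup}|\tau'|>0$; $\lambda\in S^{n-1}$ and $u\in W^{1,\infty}((0,L);\mathbb{R}^n)\setminus\{0\}$ such that $u'+(u\cdot\tau')\tau=\beta(\lambda-(\lambda\cdot\tau)\tau)$ and $|u|\tau'=ku$ a.e. in $(0,L)$; $f=k|u|$, which then satisfies $f'=\beta\,\lambda\cdot\tau'$ and $f(\tau''+k^2\tau)=\beta k^2\,\mathrm{proj}^\perp_{\tau,\tau'}(\lambda)$ weakly in $(0,L)$ (where $\mathrm{proj}^\perp_{V,W}$ is the orthogonal projection onto the orthogonal complement of $\mathrm{span}\{V,W\}$); $\Omega=\{t\in[0,L]:f(t)>0\}$ (open relative to $[0,L]$); and $\tau(t),\tau'(t),\lambda$ are linearly dependent for every $t\in\Omega$ (note $\tau'$ is continuous on $\Omega$). *)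

theory Defs
  imports "HOL-Analysis.Analysis" "HOL-Probability.Probability"
begin

definition bounded_variation_on :: "real \<Rightarrow> real \<Rightarrow> (real \<Rightarrow> real) \<Rightarrow> bool" where
  "bounded_variation_on a b g \<longleftrightarrow>
     (\<exists>M. \<forall>ts::real list. sorted ts \<and> set ts \<subseteq> {a..b} \<longrightarrow>
        (\<Sum>i<length ts - 1. \<bar>g (ts ! Suc i) - g (ts ! i)\<bar>) \<le> M)"

definition lin_dep3 :: "'a::real_vector \<Rightarrow> 'a \<Rightarrow> 'a \<Rightarrow> bool" where
  "lin_dep3 x y z \<longleftrightarrow>
     (\<exists>a b c. (a, b, c) \<noteq> (0, 0, 0) \<and> a *\<^sub>R x + b *\<^sub>R y + c *\<^sub>R z = 0)"

definition great_circle :: "'a::euclidean_space set \<Rightarrow> bool" where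
  "great_circle C \<longleftrightarrow> (\<exists>V. subspace V \<and> dim V = 2 \<and> C = V \<inter> sphere 0 1)"

end

theory Submission
  imports Defs
begin

lemma negligible_zero_deriv_image:
  fixes f :: "real \<Rightarrow> real"
  assumes der: "\<And>t. t \<in> D \<Longrightarrow> (f has_real_derivative 0) (at t)"
  shows "negligible (f ` D)"
proof -
  let ?g = "\<lambda>x::real^1. vec (f (x$1)) :: real^1"
  have "negligible (?g ` (vec ` D))"
  proof (rule baby_Sard[where f' = "\<lambda>x h. 0"])
    show "CARD(1) \<le> CARD(1)" by simp
  next
    fix x :: "real^1" assume "x \<in> vec ` D"
    then obtain t where t: "t \<in> D" "x = vec t" by auto
    have h1: "((\<lambda>x::real^1. x$1) has_derivative (\<lambda>h. h$1)) (at x)"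
      by (rule bounded_linear.has_derivative [OF bounded_linear_vec_nth]) auto
    have h2: "(f has_derivative (*) 0) (at (x$1))"
      using der[OF t(1)] t(2) unfolding has_field_derivative_def by simp
    have h3: "((\<lambda>y. vec y :: real^1) has_derivative (\<lambda>h. vec h)) (at (f (x$1)))"
      by (rule bounded_linear.has_derivative [OF linear_conv_bounded_linear[THEN iffD1, OF linear_vec]]) auto
    have "((\<lambda>x::real^1. vec (f (x$1)) :: real^1) has_derivative (\<lambda>h. vec (0 * (h$1)))) (at x)"
      using has_derivative_compose[OF has_derivative_compose[OF h1 h2] h3] by simp
    then show "(?g has_derivative (\<lambda>h. 0)) (at x within vec ` D)"
      by (auto intro: has_derivative_at_withinI simp: vec_0 zero_vec_def[symmetric])
  next
    fix x :: "real^1"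
    have "matrix (\<lambda>h::real^1. 0::real^1) = 0"
      by (simp add: matrix_def vec_eq_iff)
    then show "rank (matrix (\<lambda>h::real^1. 0::real^1)) < CARD(1)"
      by simp
  qed
  moreover have "?g ` (vec ` D) = vec ` (f ` D)" by (auto simp: image_iff)
  ultimately have neg: "negligible (vec ` (f ` D) :: (real^1) set)" by simp
  have "negligible ((\<lambda>x::real^1. x$1) ` (vec ` (f ` D)))"
    by (rule negligible_differentiable_image_negligible[OF _ neg])
       (auto intro: bounded_linear_imp_differentiable_on[OF bounded_linear_vec_nth])
  moreover have "(\<lambda>x::real^1. x$1) ` (vec ` (f ` D)) = f ` D" by (auto simp: image_iff)
  ultimately show ?thesis by simp
qed

lemma zero_deriv_ae_const:
  fixes f :: "real \<Rightarrow> real"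
  assumes ab: "a \<le> b" and N: "negligible N"
    and lip: "\<And>x. x\<in>{a..b} \<Longrightarrow> \<exists>B. \<forall>y\<in>{a..b}. \<bar>f y - f x\<bar> \<le> B * \<bar>y - x\<bar>"
    and der: "\<And>t. t\<in>{a<..<b} \<Longrightarrow> t \<notin> N \<Longrightarrow> (f has_real_derivative 0) (at t)"
  shows "f b = f a"
proof (rule ccontr)
  assume ne: "f b \<noteq> f a"
  have cont: "continuous_on {a..b} f"
    unfolding continuous_on_iff
  proof (intro ballI allI impI)
    fix x e :: real assume x: "x \<in> {a..b}" and e: "0 < e"
    obtain B where B: "\<forall>y\<in>{a..b}. \<bar>f y - f x\<bar> \<le> B * \<bar>y - x\<bar>" using lip x by blast
    show "\<exists>d>0. \<forall>y\<in>{a..b}. dist y x < d \<longrightarrow> dist (f y) (f x) < e"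
    proof (intro exI[of _ "e/(\<bar>B\<bar>+1)"] conjI ballI impI)
      show "0 < e/(\<bar>B\<bar>+1)" using e by simp
      fix y assume y: "y \<in> {a..b}" and d: "dist y x < e/(\<bar>B\<bar>+1)"
      have "\<bar>f y - f x\<bar> \<le> \<bar>B\<bar> * \<bar>y - x\<bar>" using B y
        by (meson abs_ge_self abs_ge_zero mult_right_mono order_trans)
      also have "\<dots> \<le> \<bar>B\<bar> * (e/(\<bar>B\<bar>+1))" using d unfolding dist_real_def by (intro mult_left_mono) auto
      also have "\<dots> < e" using e by (simp add: field_simps)
      finally show "dist (f y) (f x) < e" by (simp add: dist_real_def)
    qed
  qed
  have n1: "negligible (f ` (N \<inter> {a..b}))"
  proof (rule negligible_locally_Lipschitz_image)
    show "negligible (N \<inter> {a..b})" using N negligible_subset by blast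
    fix x assume "x \<in> N \<inter> {a..b}"
    then obtain B where B: "\<forall>y\<in>{a..b}. \<bar>f y - f x\<bar> \<le> B * \<bar>y - x\<bar>" using lip by blast
    show "\<exists>T B. open T \<and> x \<in> T \<and> (\<forall>y\<in>N \<inter> {a..b} \<inter> T. norm (f y - f x) \<le> B * norm (y - x))"
      using B by (intro exI[of _ UNIV] exI[of _ B]) auto
  qed auto
  have n2: "negligible (f ` ({a<..<b} - N))"
    by (rule negligible_zero_deriv_image) (use der in auto)
  have "f ` {a..b} \<subseteq> f ` (N \<inter> {a..b}) \<union> f ` ({a<..<b} - N) \<union> {f a, f b}"
  proof
    fix z assume "z \<in> f ` {a..b}"
    then obtain x where x: "x \<in> {a..b}" "z = f x" by auto
    show "z \<in> f ` (N \<inter> {a..b}) \<union> f ` ({a<..<b} - N) \<union> {f a, f b}"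
    proof (cases "x \<in> N")
      case True then show ?thesis using x by auto
    next
      case False
      then show ?thesis using x by (cases "x = a \<or> x = b") (auto simp: less_le)
    qed
  qed
  moreover have "negligible (f ` (N \<inter> {a..b}) \<union> f ` ({a<..<b} - N) \<union> {f a, f b})"
    using n1 n2 by (simp add: negligible_finite)
  ultimately have n3: "negligible (f ` {a..b})" using negligible_subset by blast
  have conn: "connected (f ` {a..b})"
    using cont connected_continuous_image connected_Icc by blast
  have "{min (f a) (f b) .. max (f a) (f b)} \<subseteq> f ` {a..b}"
    using connected_contains_Icc[OF conn] ab
    by (metis atLeastAtMost_iff image_eqI max_def min_def order_refl)
  then have "negligible {min (f a) (f b) .. max (f a) (f b)}" using n3 negligible_subset by blast
  then show False using ne by (auto simp: negligible_interval(1)[where 'a=real, simplified] min_def max_def split: if_splits)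
qed

lemma zero_deriv_ae_const_vec:
  fixes f :: "real \<Rightarrow> 'a::real_inner"
  assumes ab: "a \<le> b" and N: "negligible N"
    and lip: "\<And>x. x\<in>{a..b} \<Longrightarrow> \<exists>B. \<forall>y\<in>{a..b}. norm (f y - f x) \<le> B * \<bar>y - x\<bar>"
    and der: "\<And>t. t\<in>{a<..<b} \<Longrightarrow> t \<notin> N \<Longrightarrow> (f has_vector_derivative 0) (at t)"
  shows "f b = f a"
proof -
  define v where "v = f b - f a"
  have "(\<lambda>s. f s \<bullet> v) b = (\<lambda>s. f s \<bullet> v) a"
  proof (rule zero_deriv_ae_const[OF ab N])
    fix x assume x: "x \<in> {a..b}"
    obtain B where B: "\<forall>y\<in>{a..b}. norm (f y - f x) \<le> B * \<bar>y - x\<bar>" using lip[OF x] by blast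
    show "\<exists>B. \<forall>y\<in>{a..b}. \<bar>f y \<bullet> v - f x \<bullet> v\<bar> \<le> B * \<bar>y - x\<bar>"
    proof (intro exI[of _ "B * norm v"] ballI)
      fix y assume y: "y \<in> {a..b}"
      have "\<bar>f y \<bullet> v - f x \<bullet> v\<bar> = \<bar>(f y - f x) \<bullet> v\<bar>" by (simp add: inner_diff_left)
      also have "\<dots> \<le> norm (f y - f x) * norm v" by (rule Cauchy_Schwarz_ineq2)
      also have "\<dots> \<le> B * \<bar>y - x\<bar> * norm v" using B y by (simp add: mult_right_mono)
      finally show "\<bar>f y \<bullet> v - f x \<bullet> v\<bar> \<le> B * norm v * \<bar>y - x\<bar>" by (simp add: algebra_simps)
    qed
  next
    fix t assume t: "t \<in> {a<..<b}" "t \<notin> N"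
    have "(f has_derivative (\<lambda>h. h *\<^sub>R 0)) (at t)"
      using der[OF t] by (simp add: has_vector_derivative_def)
    then have "((\<lambda>s. f s \<bullet> v) has_derivative (\<lambda>h. (h *\<^sub>R 0) \<bullet> v)) (at t)"
      by (rule has_derivative_inner_left)
    moreover have eq: "((*) (0::real)) = (\<lambda>h. 0)" by (rule ext) simp
    ultimately show "((\<lambda>s. f s \<bullet> v) has_real_derivative 0) (at t)"
      unfolding has_field_derivative_def eq by simp
  qed
  then have "(f b - f a) \<bullet> v = 0" by (simp add: inner_diff_left)
  then show ?thesis by (simp add: v_def)
qed

lemma ftc_ae:
  fixes f g :: "real \<Rightarrow> 'a::euclidean_space"
  assumes ab: "a \<le> b" and N: "negligible N"
    and lip: "\<And>x. x\<in>{a..b} \<Longrightarrow> \<exists>B. \<forall>y\<in>{a..b}. norm (f y - f x) \<le> B * \<bar>y - x\<bar>"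
    and g: "continuous_on {a..b} g"
    and der: "\<And>t. t\<in>{a<..<b} \<Longrightarrow> t \<notin> N \<Longrightarrow> (f has_vector_derivative g t) (at t)"
    and x: "x \<in> {a..b}"
  shows "(f has_vector_derivative g x) (at x within {a..b})"
proof -
  define h where "h s = f s - integral {a..s} g" for s
  obtain M where M: "\<And>s. s \<in> {a..b} \<Longrightarrow> norm (g s) \<le> M"
    using compact_imp_bounded[OF compact_continuous_image[OF g compact_Icc]]
    unfolding bounded_iff by (metis atLeastAtMost_iff image_eqI)
  have gi: "g integrable_on {c..d}" if "{c..d} \<subseteq> {a..b}" for c d
    using integrable_continuous_real[OF continuous_on_subset[OF g that]] .
  have intdiff: "norm (integral {a..y} g - integral {a..x} g) \<le> \<bar>M\<bar> * \<bar>y - x\<bar>"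
    if xy: "x \<in> {a..b}" "y \<in> {a..b}" for x y
  proof -
    have *: "norm (integral {a..y} g - integral {a..x} g) \<le> \<bar>M\<bar> * (y - x)"
      if xy: "x \<in> {a..b}" "y \<in> {a..b}" "x \<le> y" for x y
    proof -
      have "integral {a..x} g + integral {x..y} g = integral {a..y} g"
        by (rule Henstock_Kurzweil_Integration.integral_combine) (use xy gi in auto)
      then have eq: "integral {a..y} g - integral {a..x} g = integral {x..y} g" by (simp add: algebra_simps)
      have "norm (integral {x..y} g) \<le> \<bar>M\<bar> * (y - x)"
      proof -
        have bnd: "norm (g z) \<le> \<bar>M\<bar>" if "z \<in> cbox x y" for z
          using M[of z] that xy by (auto intro: order_trans[OF _ abs_ge_self])
        have gxy: "(g has_integral integral {x..y} g) (cbox x y)"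
          using integrable_integral[OF gi[of x y]] xy by auto
        show ?thesis using has_integral_bound[OF abs_ge_zero gxy bnd] xy by simp
      qed
      then show ?thesis using eq xy by simp
    qed
    show ?thesis
    proof (cases "x \<le> y")
      case True then show ?thesis using *[OF xy] by simp
    next
      case False then show ?thesis using *[OF xy(2,1)] by (simp add: norm_minus_commute)
    qed
  qed
  have heq: "h s = h a" if s: "s \<in> {a..b}" for s
  proof (rule zero_deriv_ae_const_vec[OF _ N])
    show "a \<le> s" using s by simp
  next
    fix x assume x: "x \<in> {a..s}"
    then have xab: "x \<in> {a..b}" using s by auto
    obtain B where B: "\<forall>y\<in>{a..b}. norm (f y - f x) \<le> B * \<bar>y - x\<bar>" using lip[OF xab] by blast
    show "\<exists>B. \<forall>y\<in>{a..s}. norm (h y - h x) \<le> B * \<bar>y - x\<bar>"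
    proof (intro exI[of _ "B + \<bar>M\<bar>"] ballI)
      fix y assume "y \<in> {a..s}"
      then have yab: "y \<in> {a..b}" using s by auto
      have "norm (h y - h x) = norm ((f y - f x) - (integral {a..y} g - integral {a..x} g))"
        by (simp add: h_def algebra_simps)
      also have "\<dots> \<le> norm (f y - f x) + norm (integral {a..y} g - integral {a..x} g)"
        by (rule norm_triangle_ineq4)
      also have "\<dots> \<le> B * \<bar>y - x\<bar> + \<bar>M\<bar> * \<bar>y - x\<bar>"
        using B yab intdiff[OF xab yab] by (intro add_mono) auto
      finally show "norm (h y - h x) \<le> (B + \<bar>M\<bar>) * \<bar>y - x\<bar>" by (simp add: algebra_simps)
    qed
  next
    fix t assume t: "t \<in> {a<..<s}" "t \<notin> N"
    then have tab: "t \<in> {a<..<b}" using s by auto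
    have "((\<lambda>u. integral {a..u} g) has_vector_derivative g t) (at t within {a..b})"
      by (rule integral_has_vector_derivative[OF g]) (use tab in auto)
    then have i: "((\<lambda>u. integral {a..u} g) has_vector_derivative g t) (at t)"
      using at_within_Icc_at[of a t b] tab by simp
    have "(h has_vector_derivative (g t - g t)) (at t)"
      unfolding h_def by (intro has_vector_derivative_diff der[OF tab t(2)] i)
    then show "(h has_vector_derivative 0) (at t)" by simp
  qed
  have feq: "f s = f a + integral {a..s} g" if "s \<in> {a..b}" for s
    using heq[OF that] unfolding h_def by (simp add: diff_eq_eq add.commute)
  have "((\<lambda>s. f a + integral {a..s} g) has_vector_derivative (0 + g x)) (at x within {a..b})"
    by (intro has_vector_derivative_add has_vector_derivative_const integral_has_vector_derivative[OF g x])
  then show ?thesis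
    using has_vector_derivative_transform[OF x feq] by simp
qed

lemma vd_quot:
  fixes f :: "real \<Rightarrow> 'a::real_normed_vector"
  assumes "(f has_vector_derivative f') (at x within S)"
  shows "((\<lambda>y. (f y - f x) /\<^sub>R (y - x)) \<longlongrightarrow> f') (at x within S)"
proof -
  have "((\<lambda>y. (1 / norm (y - x)) *\<^sub>R (f y - (f x + (y - x) *\<^sub>R f'))) \<longlongrightarrow> 0) (at x within S)"
    using assms unfolding has_vector_derivative_def has_derivative_within by simp
  then have t1: "((\<lambda>y. norm ((1 / norm (y - x)) *\<^sub>R (f y - (f x + (y - x) *\<^sub>R f')))) \<longlongrightarrow> 0) (at x within S)"
    using tendsto_norm by fastforce
  moreover have eqn: "norm ((1 / norm (y - x)) *\<^sub>R (f y - (f x + (y - x) *\<^sub>R f'))) = norm ((f y - f x) /\<^sub>R (y - x) - f')"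
    if "y \<noteq> x" for y
  proof -
    have "(f y - f x) /\<^sub>R (y - x) - f' = (1 / (y - x)) *\<^sub>R (f y - (f x + (y - x) *\<^sub>R f'))"
    proof -
      have "(1 / (y - x)) *\<^sub>R (f y - (f x + (y - x) *\<^sub>R f')) = (1 / (y - x)) *\<^sub>R (f y - f x) - ((1 / (y - x)) * (y - x)) *\<^sub>R f'"
        by (simp add: scaleR_diff_right scaleR_add_right)
      also have "\<dots> = (f y - f x) /\<^sub>R (y - x) - f'" using that by (simp add: divide_inverse)
      finally show ?thesis by simp
    qed
    then show ?thesis by simp
  qed
  ultimately have "((\<lambda>y. norm ((f y - f x) /\<^sub>R (y - x) - f')) \<longlongrightarrow> 0) (at x within S)"
  proof -
    have "eventually (\<lambda>y. norm ((1 / norm (y - x)) *\<^sub>R (f y - (f x + (y - x) *\<^sub>R f'))) = norm ((f y - f x) /\<^sub>R (y - x) - f')) (at x within S)"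
      unfolding eventually_at_filter using eqn by (auto intro!: always_eventually)
    from Lim_transform_eventually[OF t1 this] show ?thesis .
  qed
  then show ?thesis
    by (simp add: tendsto_norm_zero_iff LIM_zero_iff)
qed

lemma normalize_deriv:
  fixes f :: "real \<Rightarrow> 'a::real_inner"
  assumes d: "(f has_vector_derivative (c *\<^sub>R f x)) (at x)" and nz: "f x \<noteq> 0"
  shows "((\<lambda>s. f s /\<^sub>R norm (f s)) has_vector_derivative 0) (at x)"
proof -
  have dn: "(norm has_derivative (\<lambda>h. h \<bullet> sgn (f x))) (at (f x))"
    using has_derivative_norm[OF nz] .
  have "((\<lambda>s. norm (f s)) has_derivative (\<lambda>h. (h *\<^sub>R (c *\<^sub>R f x)) \<bullet> sgn (f x))) (at x)"
    using has_derivative_compose[OF d[unfolded has_vector_derivative_def] dn] .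
  moreover have "(\<lambda>h. (h *\<^sub>R (c *\<^sub>R f x)) \<bullet> sgn (f x)) = (*) (c * norm (f x))"
  proof
    fix h
    have "f x \<bullet> sgn (f x) = norm (f x)"
      using nz by (simp add: sgn_div_norm power2_norm_eq_inner[symmetric] power2_eq_square)
    then show "(h *\<^sub>R (c *\<^sub>R f x)) \<bullet> sgn (f x) = c * norm (f x) * h" by simp
  qed
  ultimately have n: "((\<lambda>s. norm (f s)) has_real_derivative (c * norm (f x))) (at x)"
    by (simp add: has_field_derivative_def)
  have i: "((\<lambda>s. inverse (norm (f s))) has_real_derivative
            (- (inverse (norm (f x)) * (c * norm (f x)) * inverse (norm (f x))))) (at x)"
    using DERIV_inverse_fun[OF n] nz by (simp add: mult_ac)
  have "((\<lambda>s. inverse (norm (f s)) *\<^sub>R f s) has_vector_derivative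
          (inverse (norm (f x)) *\<^sub>R (c *\<^sub>R f x) + (- (inverse (norm (f x)) * (c * norm (f x)) * inverse (norm (f x)))) *\<^sub>R f x)) (at x)"
    by (rule has_vector_derivative_scaleR[OF i d])
  moreover have z: "inverse (norm (f x)) *\<^sub>R (c *\<^sub>R f x) + (- (inverse (norm (f x)) * (c * norm (f x)) * inverse (norm (f x)))) *\<^sub>R f x = 0"
  proof -
    have e: "inverse (norm (f x)) * (c * norm (f x)) * inverse (norm (f x)) = inverse (norm (f x)) * c"
      using nz by (simp add: field_simps)
    show ?thesis by (simp add: e)
  qed
  ultimately show ?thesis by (simp only: z)
qed

lemma countable_isolated:
  fixes Z :: "real set"
  shows "countable {x\<in>Z. \<not> x islimpt Z}"
proof -
  let ?X = "{x\<in>Z. \<not> x islimpt Z}"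
  have "\<exists>n::nat. \<forall>y\<in>Z. dist y x < 1 / Suc n \<longrightarrow> y = x" if "x \<in> ?X" for x
  proof -
    from that obtain e where e: "e > 0" "\<And>y. y\<in>Z \<Longrightarrow> y \<noteq> x \<Longrightarrow> dist y x \<ge> e"
      unfolding islimpt_approachable by (auto simp: not_less)
    obtain n :: nat where n: "1 / Suc n < e" using e(1) by (metis nat_approx_posE)
    show ?thesis
    proof (intro exI[of _ n] ballI impI)
      fix y assume y: "y \<in> Z" "dist y x < 1 / Suc n"
      show "y = x"
      proof (rule ccontr)
        assume "y \<noteq> x"
        then have "dist y x \<ge> e" using e(2) y(1) by blast
        then show False using y(2) n by linarith
      qed
    qed
  qed
  then obtain n where n: "\<And>x. x \<in> ?X \<Longrightarrow> \<forall>y\<in>Z. dist y x < 1 / Suc (n x) \<longrightarrow> y = x" by metis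
  have "\<exists>r\<in>\<rat>. dist r x < 1 / (2 * Suc (n x))" for x
  proof -
    have d: "0 < 1 / (2 * real (Suc (n x)))" by simp
    obtain r where "r \<in> \<rat>" "x - 1 / (2 * real (Suc (n x))) < r" "r < x"
      using Rats_dense_in_real[of "x - 1 / (2 * real (Suc (n x)))" x] d by auto
    then show ?thesis by (intro bexI[of _ r]) (auto simp: dist_real_def)
  qed
  then obtain r where r: "\<And>x. r x \<in> \<rat>" "\<And>x. dist (r x) x < 1 / (2 * Suc (n x))" by metis
  have inj: "inj_on (\<lambda>x. (r x, n x)) ?X"
  proof (rule inj_onI)
    fix x y assume x: "x \<in> ?X" and y: "y \<in> ?X" and eq: "(r x, n x) = (r y, n y)"
    then have eq1: "r x = r y" and eq2: "n x = n y" by auto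
    have "dist y x \<le> dist y (r y) + dist (r y) x" by (rule dist_triangle)
    also have "\<dots> = dist (r y) y + dist (r x) x" using eq1 by (simp add: dist_commute)
    also have "\<dots> < 1 / (2 * Suc (n x)) + 1 / (2 * Suc (n x))"
      using r(2)[of x] r(2)[of y] eq2 by simp
    also have "\<dots> = 1 / Suc (n x)" by (simp add: field_simps)
    finally have "dist y x < 1 / Suc (n x)" .
    then show "x = y" using n[OF x] y by auto
  qed
  have "(\<lambda>x. (r x, n x)) ` ?X \<subseteq> \<rat> \<times> UNIV" using r(1) by auto
  moreover have "countable (\<rat> \<times> (UNIV :: nat set))" by (simp add: countable_rat)
  ultimately have "countable ((\<lambda>x. (r x, n x)) ` ?X)" using countable_subset by blast
  then show ?thesis using countable_image_inj_on inj by blast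
qed

lemma countable_negligible:
  fixes A :: "'a::euclidean_space set"
  assumes "countable A" shows "negligible A"
proof -
  have "A = \<Union>((\<lambda>x. {x}) ` A)" by auto
  moreover have "negligible (\<Union>((\<lambda>x. {x}) ` A))"
    by (rule negligible_countable_Union) (use assms in auto)
  ultimately show ?thesis by simp
qed

lemma norm_normalize_diff:
  fixes x y :: "'a::real_normed_vector"
  assumes "x \<noteq> 0"
  shows "norm (y /\<^sub>R norm y - x /\<^sub>R norm x) \<le> 2 * norm (y - x) / norm x"
proof (cases "y = 0")
  case True then show ?thesis using assms by simp
next
  case False
  have nx: "norm x > 0" and ny: "norm y > 0" using assms False by auto
  have "y /\<^sub>R norm y - x /\<^sub>R norm x = (y - x) /\<^sub>R norm x + (inverse (norm y) - inverse (norm x)) *\<^sub>R y"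
    by (simp add: scaleR_diff_right scaleR_diff_left)
  then have "norm (y /\<^sub>R norm y - x /\<^sub>R norm x) \<le> norm ((y - x) /\<^sub>R norm x) + norm ((inverse (norm y) - inverse (norm x)) *\<^sub>R y)"
    by (metis norm_triangle_ineq)
  also have "norm ((y - x) /\<^sub>R norm x) = norm (y - x) / norm x"
    using nx by (simp add: divide_inverse_commute)
  also have "norm ((inverse (norm y) - inverse (norm x)) *\<^sub>R y) = \<bar>inverse (norm y) - inverse (norm x)\<bar> * norm y"
    by simp
  also have "\<bar>inverse (norm y) - inverse (norm x)\<bar> * norm y = \<bar>norm x - norm y\<bar> / norm x"
  proof -
    have "inverse (norm y) - inverse (norm x) = (norm x - norm y) / (norm x * norm y)"
      using nx ny by (simp add: field_simps)
    then have "\<bar>inverse (norm y) - inverse (norm x)\<bar> = \<bar>norm x - norm y\<bar> / (norm x * norm y)"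
      by (simp only: abs_divide abs_mult abs_norm_cancel)
    then show ?thesis using ny by simp
  qed
  also have "\<bar>norm x - norm y\<bar> / norm x \<le> norm (y - x) / norm x"
    using nx by (intro divide_right_mono) (auto simp: norm_triangle_ineq3 norm_minus_commute)
  finally have "norm (y /\<^sub>R norm y - x /\<^sub>R norm x) \<le> norm (y - x) / norm x + norm (y - x) / norm x" by simp
  also have "norm (y - x) / norm x + norm (y - x) / norm x = 2 * norm (y - x) / norm x"
    by (simp add: add_divide_distrib[symmetric])
  finally show ?thesis .
qed

lemma normalize_scale_pos:
  fixes x :: "'a::real_normed_vector"
  assumes "c > 0" shows "(x /\<^sub>R c) /\<^sub>R norm (x /\<^sub>R c) = x /\<^sub>R norm x"
proof -
  have "norm (x /\<^sub>R c) = norm x / c" using assms by (simp add: divide_inverse mult.commute)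
  then have "(x /\<^sub>R c) /\<^sub>R norm (x /\<^sub>R c) = (inverse (norm x / c) * inverse c) *\<^sub>R x"
    by simp
  also have "inverse (norm x / c) * inverse c = inverse (norm x)" using assms by (simp add: inverse_eq_divide)
  finally show ?thesis by simp
qed
lemma normalize_scale_neg:
  fixes x :: "'a::real_normed_vector"
  assumes "c < 0" shows "(x /\<^sub>R c) /\<^sub>R norm (x /\<^sub>R c) = - (x /\<^sub>R norm x)"
proof -
  have "norm (x /\<^sub>R c) = norm x / (- c)" using assms by (simp add: divide_inverse mult.commute)
  then have "(x /\<^sub>R c) /\<^sub>R norm (x /\<^sub>R c) = (inverse (norm x / (-c)) * inverse c) *\<^sub>R x"
    by simp
  also have "inverse (norm x / (-c)) * inverse c = - inverse (norm x)" using assms by (simp add: inverse_eq_divide)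
  finally show ?thesis by simp
qed

lemma unit_mult:
  fixes x y :: "'a::real_normed_vector"
  assumes "norm x = 1" "norm y = 1" "x = r *\<^sub>R y"
  shows "x = y \<or> x = - y"
proof -
  have "\<bar>r\<bar> = 1" using assms by simp
  then have "r = 1 \<or> r = -1" by linarith
  then show ?thesis using assms(3) by auto
qed

locale curve =
  fixes L k :: real
    and beta :: "real \<Rightarrow> real"
    and tau tau' u u' :: "real \<Rightarrow> real ^ 'n"
    and lam :: "real ^ 'n"
  assumes L_pos: "L > 0"
    and beta_pos: "\<forall>t\<in>{0..L}. beta t > 0"
    and tau_lip: "\<exists>C. lipschitz_on C {0..L} tau"
    and tau_sphere: "\<forall>t\<in>{0..L}. norm (tau t) = 1"
    and tau_deriv: "AE t in lebesgue. t \<in> {0<..<L} \<longrightarrow> (tau has_vector_derivative tau' t) (at t)"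
    and k_pos: "k > 0"
    and lam_sphere: "norm lam = 1"
    and u_lip: "\<exists>C. lipschitz_on C {0..L} u"
    and u_deriv: "AE t in lebesgue. t \<in> {0<..<L} \<longrightarrow> (u has_vector_derivative u' t) (at t)"
    and ode1: "AE t in lebesgue. t \<in> {0<..<L} \<longrightarrow>
                 u' t + (u t \<bullet> tau' t) *\<^sub>R tau t = beta t *\<^sub>R (lam - (lam \<bullet> tau t) *\<^sub>R tau t)"
    and ode2: "AE t in lebesgue. t \<in> {0<..<L} \<longrightarrow> norm (u t) *\<^sub>R tau' t = k *\<^sub>R u t"
    and dep: "\<forall>t\<in>{t\<in>{0..L}. k * norm (u t) > 0}. lin_dep3 (tau t) (tau' t) lam"
begin

definition p where "p t = tau t - (lam \<bullet> tau t) *\<^sub>R lam"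
definition q where "q t = p t /\<^sub>R norm (p t)"
definition dir where "dir t = (if p t \<noteq> 0 then q t else u t /\<^sub>R norm (u t))"
definition S where "S = {t\<in>{0..L}. tau t \<noteq> lam \<and> tau t \<noteq> - lam}"

lemma lamlam: "lam \<bullet> lam = 1"
  using lam_sphere by (simp add: norm_eq_1)

lemma p_orth: "p t \<bullet> lam = 0"
  unfolding p_def inner_diff_left inner_scaleR_left lamlam by (simp add: inner_commute)

lemma p_zero_iff:
  assumes "t \<in> {0..L}"
  shows "p t = 0 \<longleftrightarrow> tau t = lam \<or> tau t = - lam"
proof
  assume "p t = 0"
  then have "tau t = (lam \<bullet> tau t) *\<^sub>R lam" by (simp add: p_def)
  then show "tau t = lam \<or> tau t = - lam"
    using unit_mult[OF _ lam_sphere] tau_sphere assms by blast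
next
  assume "tau t = lam \<or> tau t = - lam"
  then show "p t = 0"
  proof
    assume "tau t = lam" then show ?thesis by (simp add: p_def lamlam)
  next
    assume "tau t = - lam" then show ?thesis by (simp add: p_def lamlam)
  qed
qed

lemma tauC: obtains C where "C \<ge> 0" "\<And>x y. x \<in> {0..L} \<Longrightarrow> y \<in> {0..L} \<Longrightarrow> norm (tau y - tau x) \<le> C * \<bar>y - x\<bar>"
proof -
  obtain C where C: "C-lipschitz_on {0..L} tau" using tau_lip by blast
  show ?thesis
  proof (rule that[of C])
    show "C \<ge> 0" using lipschitz_on_nonneg[OF C] .
    fix x y assume "x \<in> {0..L}" "y \<in> {0..L}"
    then show "norm (tau y - tau x) \<le> C * \<bar>y - x\<bar>"
      using lipschitz_onD[OF C] by (simp add: dist_norm)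
  qed
qed

lemma uC: obtains C where "C \<ge> 0" "\<And>x y. x \<in> {0..L} \<Longrightarrow> y \<in> {0..L} \<Longrightarrow> norm (u y - u x) \<le> C * \<bar>y - x\<bar>"
proof -
  obtain C where C: "C-lipschitz_on {0..L} u" using u_lip by blast
  show ?thesis
  proof (rule that[of C])
    show "C \<ge> 0" using lipschitz_on_nonneg[OF C] .
    fix x y assume "x \<in> {0..L}" "y \<in> {0..L}"
    then show "norm (u y - u x) \<le> C * \<bar>y - x\<bar>"
      using lipschitz_onD[OF C] by (simp add: dist_norm)
  qed
qed

lemma pC: obtains C where "C \<ge> 0" "\<And>x y. x \<in> {0..L} \<Longrightarrow> y \<in> {0..L} \<Longrightarrow> norm (p y - p x) \<le> C * \<bar>y - x\<bar>"
proof -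
  obtain C where C: "C \<ge> 0" "\<And>x y. x \<in> {0..L} \<Longrightarrow> y \<in> {0..L} \<Longrightarrow> norm (tau y - tau x) \<le> C * \<bar>y - x\<bar>"
    using tauC by blast
  show ?thesis
  proof (rule that[of "2*C"])
    show "2*C \<ge> 0" using C by simp
    fix x y assume xy: "x \<in> {0..L}" "y \<in> {0..L}"
    let ?d = "tau y - tau x"
    have "p y - p x = ?d - (lam \<bullet> ?d) *\<^sub>R lam"
      by (simp add: p_def inner_diff_right algebra_simps)
    then have "norm (p y - p x) \<le> norm ?d + norm ((lam \<bullet> ?d) *\<^sub>R lam)"
      by (metis norm_triangle_ineq4)
    also have "norm ((lam \<bullet> ?d) *\<^sub>R lam) \<le> norm ?d"
      using Cauchy_Schwarz_ineq2[of lam ?d] lam_sphere by simp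
    finally have "norm (p y - p x) \<le> 2 * norm ?d" by simp
    also have "\<dots> \<le> 2 * (C * \<bar>y - x\<bar>)" using C(2)[OF xy] by simp
    finally show "norm (p y - p x) \<le> 2 * C * \<bar>y - x\<bar>" by simp
  qed
qed

lemma good: obtains N where "negligible N"
  "\<And>t. t \<in> {0<..<L} \<Longrightarrow> t \<notin> N \<Longrightarrow>
     (tau has_vector_derivative tau' t) (at t) \<and> (u has_vector_derivative u' t) (at t) \<and>
     u' t + (u t \<bullet> tau' t) *\<^sub>R tau t = beta t *\<^sub>R (lam - (lam \<bullet> tau t) *\<^sub>R tau t) \<and>
     norm (u t) *\<^sub>R tau' t = k *\<^sub>R u t"
proof -
  have "AE t in lebesgue. t \<in> {0<..<L} \<longrightarrow>
     (tau has_vector_derivative tau' t) (at t) \<and> (u has_vector_derivative u' t) (at t) \<and>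
     u' t + (u t \<bullet> tau' t) *\<^sub>R tau t = beta t *\<^sub>R (lam - (lam \<bullet> tau t) *\<^sub>R tau t) \<and>
     norm (u t) *\<^sub>R tau' t = k *\<^sub>R u t"
    using tau_deriv u_deriv ode1 ode2 by eventually_elim auto
  then obtain N where N: "{t \<in> space lebesgue. \<not> (t \<in> {0<..<L} \<longrightarrow>
     (tau has_vector_derivative tau' t) (at t) \<and> (u has_vector_derivative u' t) (at t) \<and>
     u' t + (u t \<bullet> tau' t) *\<^sub>R tau t = beta t *\<^sub>R (lam - (lam \<bullet> tau t) *\<^sub>R tau t) \<and>
     norm (u t) *\<^sub>R tau' t = k *\<^sub>R u t)} \<subseteq> N" "emeasure lebesgue N = 0" "N \<in> sets lebesgue"
    by (rule AE_E)
  have "negligible N" using N(2,3) by (simp add: negligible_iff_null_sets null_sets_def)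
  then show ?thesis by (rule that) (use N(1) in auto)
qed

lemma p_fun: "p = (\<lambda>t. tau t - (lam \<bullet> tau t) *\<^sub>R lam)"
  by (rule ext) (simp add: p_def)

lemma q_fun: "q = (\<lambda>t. p t /\<^sub>R norm (p t))"
  by (rule ext) (simp add: q_def)

lemma p_deriv:
  assumes "(tau has_vector_derivative D) F"
  shows "(p has_vector_derivative (D - (lam \<bullet> D) *\<^sub>R lam)) F"
proof -
  have bl: "bounded_linear (\<lambda>x::real^'n. x - (lam \<bullet> x) *\<^sub>R lam)"
    by (intro bounded_linear_sub bounded_linear_ident bounded_linear_scaleR_const bounded_linear_inner_right)
  show ?thesis
    unfolding p_fun using bounded_linear.has_vector_derivative[OF bl assms] by simp
qed

lemma dep_c:
  assumes t: "t \<in> S" "u t \<noteq> 0" and d: "(tau has_vector_derivative tau' t) (at t)"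
  shows "\<exists>c. (p has_vector_derivative c *\<^sub>R p t) (at t)"
proof -
  have tL: "t \<in> {0..L}" and nl: "tau t \<noteq> lam" "tau t \<noteq> - lam" using t(1) by (auto simp: S_def)
  have "k * norm (u t) > 0" using k_pos t(2) by simp
  then have "lin_dep3 (tau t) (tau' t) lam" using dep tL by blast
  then obtain a b c where nz: "(a, b, c) \<noteq> (0, 0, 0)" and eq: "a *\<^sub>R tau t + b *\<^sub>R tau' t + c *\<^sub>R lam = 0"
    unfolding lin_dep3_def by blast
  have b: "b \<noteq> 0"
  proof
    assume b0: "b = 0"
    then have eq2: "a *\<^sub>R tau t = (- c) *\<^sub>R lam" using eq by (simp add: add_eq_0_iff)
    show False
    proof (cases "a = 0")
      case True
      then have "c *\<^sub>R lam = 0" using eq2 by simp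
      then have "c = 0" using lam_sphere by auto
      then show False using nz b0 True by simp
    next
      case False
      then have "tau t = (- c / a) *\<^sub>R lam" using eq2
        by (metis (no_types, lifting) divide_inverse_commute scaleR_scaleR inverse_eq_divide scaleR_one right_inverse mult.commute)
      then show False using unit_mult[OF _ lam_sphere] tau_sphere tL nl by blast
    qed
  qed
  have D: "tau' t = (- a / b) *\<^sub>R tau t + (- c / b) *\<^sub>R lam"
  proof -
    have "b *\<^sub>R tau' t = (- a) *\<^sub>R tau t + (- c) *\<^sub>R lam" using eq
      by (simp add: algebra_simps eq_neg_iff_add_eq_0)
    then have "tau' t = (1 / b) *\<^sub>R ((- a) *\<^sub>R tau t + (- c) *\<^sub>R lam)" using b
      by (metis (no_types, lifting) divide_self_if nonzero_divide_eq_eq scaleR_one scaleR_scaleR times_divide_eq_left)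
    then show ?thesis by (simp add: scaleR_add_right scaleR_diff_right times_divide_eq_left)
  qed
  define \<alpha> where "\<alpha> = - a / b"
  define \<gamma> where "\<gamma> = - c / b"
  have D': "tau' t = \<alpha> *\<^sub>R tau t + \<gamma> *\<^sub>R lam" using D by (simp add: \<alpha>_def \<gamma>_def)
  have i: "lam \<bullet> tau' t = \<alpha> * (lam \<bullet> tau t) + \<gamma>"
    unfolding D' inner_add_right inner_scaleR_right lamlam by simp
  have "tau' t - (lam \<bullet> tau' t) *\<^sub>R lam = \<alpha> *\<^sub>R tau t + \<gamma> *\<^sub>R lam - (\<alpha> * (lam \<bullet> tau t) + \<gamma>) *\<^sub>R lam"
    unfolding i by (subst D') (rule refl)
  also have "\<dots> = \<alpha> *\<^sub>R (tau t - (lam \<bullet> tau t) *\<^sub>R lam)"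
    by (simp only: scaleR_add_left scaleR_diff_right scaleR_scaleR) simp
  finally have "tau' t - (lam \<bullet> tau' t) *\<^sub>R lam = (- a / b) *\<^sub>R p t"
    by (simp add: p_def \<alpha>_def)
  then have "(p has_vector_derivative (- a / b) *\<^sub>R p t) (at t)"
    using p_deriv[OF d] by simp
  then show ?thesis by blast
qed

lemma Z_limpt:
  assumes t: "t \<in> {0<..<L}" "t \<in> S" "u t = 0"
    and du: "(u has_vector_derivative u' t) (at t)"
    and o1: "u' t + (u t \<bullet> tau' t) *\<^sub>R tau t = beta t *\<^sub>R (lam - (lam \<bullet> tau t) *\<^sub>R tau t)"
  shows "\<not> t islimpt {s. u s = 0}"
proof
  assume lp: "t islimpt {s. u s = 0}"
  let ?Z = "{s. u s = 0}"
  have ntriv: "\<not> trivial_limit (at t within ?Z)" using lp trivial_limit_within by blast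
  have d1: "(u has_vector_derivative u' t) (at t within ?Z)"
    using du by (rule has_vector_derivative_at_within)
  have d2: "(u has_vector_derivative 0) (at t within ?Z)"
  proof (rule has_vector_derivative_transform[of t ?Z u "\<lambda>s. 0" 0])
    show "t \<in> ?Z" using t(3) by simp
    show "\<And>x. x \<in> ?Z \<Longrightarrow> u x = 0" by simp
    show "((\<lambda>s. 0) has_vector_derivative 0) (at t within ?Z)" by (rule has_vector_derivative_const)
  qed
  have "u' t = 0" using vector_derivative_unique_within[OF ntriv d1 d2] .
  then have "beta t *\<^sub>R (lam - (lam \<bullet> tau t) *\<^sub>R tau t) = 0" using o1 t(3) by simp
  moreover have "beta t > 0" using beta_pos t(1) by auto
  ultimately have "lam - (lam \<bullet> tau t) *\<^sub>R tau t = 0" by simp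
  then have eqlam: "lam = (lam \<bullet> tau t) *\<^sub>R tau t" by (simp only: right_minus_eq)
  have nt: "norm (tau t) = 1" using tau_sphere t(1) by auto
  have "lam = tau t \<or> lam = - tau t"
    by (rule unit_mult[OF lam_sphere nt eqlam])
  moreover have "tau t \<noteq> lam" "tau t \<noteq> - lam" using t(2) unfolding S_def by auto
  ultimately show False by (metis minus_minus)
qed

lemma S_sub: "S \<subseteq> {0..L}" by (auto simp: S_def)

lemma pnz: "x \<in> S \<Longrightarrow> p x \<noteq> 0"
  using p_zero_iff unfolding S_def by blast

lemma inS: "x \<in> {0..L} \<Longrightarrow> p x \<noteq> 0 \<Longrightarrow> x \<in> S"
  using p_zero_iff unfolding S_def by blast

lemma A:
  assumes ab: "a \<le> b" "{a..b} \<subseteq> S"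
  shows "q b = q a"
proof -
  obtain N where N: "negligible N" and g: "\<And>t. t \<in> {0<..<L} \<Longrightarrow> t \<notin> N \<Longrightarrow>
     (tau has_vector_derivative tau' t) (at t) \<and> (u has_vector_derivative u' t) (at t) \<and>
     u' t + (u t \<bullet> tau' t) *\<^sub>R tau t = beta t *\<^sub>R (lam - (lam \<bullet> tau t) *\<^sub>R tau t) \<and>
     norm (u t) *\<^sub>R tau' t = k *\<^sub>R u t"
    using good by blast
  define Z where "Z = {s. u s = 0}"
  define N' where "N' = N \<union> {x\<in>Z. \<not> x islimpt Z}"
  have negN': "negligible N'"
    unfolding N'_def by (intro negligible_Un N countable_negligible countable_isolated)
  obtain C where C: "C \<ge> 0" "\<And>x y. x \<in> {0..L} \<Longrightarrow> y \<in> {0..L} \<Longrightarrow> norm (p y - p x) \<le> C * \<bar>y - x\<bar>"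
    using pC by blast
  have aS: "a \<in> S" and bS: "b \<in> S" using ab by auto
  show "q b = q a"
  proof (rule zero_deriv_ae_const_vec[OF ab(1) negN'])
    fix x assume x: "x \<in> {a..b}"
    then have xS: "x \<in> S" using ab by auto
    show "\<exists>B. \<forall>y\<in>{a..b}. norm (q y - q x) \<le> B * \<bar>y - x\<bar>"
    proof (intro exI[of _ "2 * C / norm (p x)"] ballI)
      fix y assume "y \<in> {a..b}"
      then have yS: "y \<in> S" using ab by auto
      have "norm (q y - q x) \<le> 2 * norm (p y - p x) / norm (p x)"
        unfolding q_def by (rule norm_normalize_diff[OF pnz[OF xS]])
      also have "\<dots> \<le> 2 * (C * \<bar>y - x\<bar>) / norm (p x)"
      proof -
        have "x \<in> {0..L}" "y \<in> {0..L}" using xS yS S_sub by auto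
        then have "norm (p y - p x) \<le> C * \<bar>y - x\<bar>" by (rule C(2))
        then show ?thesis by (intro divide_right_mono mult_left_mono) auto
      qed
      finally show "norm (q y - q x) \<le> 2 * C / norm (p x) * \<bar>y - x\<bar>" by simp
    qed
  next
    fix t assume t: "t \<in> {a<..<b}" "t \<notin> N'"
    have tS: "t \<in> S" using t(1) ab by auto
    have "0 \<le> a" "b \<le> L" using aS bS S_sub by auto
    then have t0L: "t \<in> {0<..<L}" using t(1) by auto
    have tN: "t \<notin> N" using t(2) by (simp add: N'_def)
    note gt = g[OF t0L tN]
    have ut: "u t \<noteq> 0"
    proof
      assume u0: "u t = 0"
      then have "t \<in> Z" by (simp add: Z_def)
      moreover have "\<not> t islimpt Z"
        unfolding Z_def using Z_limpt[OF t0L tS u0] gt by blast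
      ultimately have "t \<in> N'" by (simp add: N'_def)
      then show False using t(2) by simp
    qed
    obtain c where "(p has_vector_derivative c *\<^sub>R p t) (at t)" using dep_c[OF tS ut] gt by blast
    from normalize_deriv[OF this pnz[OF tS]] show "(q has_vector_derivative 0) (at t)"
      unfolding q_fun .
  qed
qed

lemma NZ:
  assumes t: "t \<in> {0..L}" "p t \<noteq> 0"
  shows "\<exists>e>0. \<forall>s\<in>{0..L}. \<bar>s - t\<bar> < e \<longrightarrow> p s \<noteq> 0 \<and> q s = q t"
proof -
  obtain C where C: "C \<ge> 0" "\<And>x y. x \<in> {0..L} \<Longrightarrow> y \<in> {0..L} \<Longrightarrow> norm (p y - p x) \<le> C * \<bar>y - x\<bar>"
    using pC by blast
  define e where "e = norm (p t) / (C + 1)"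
  have e: "e > 0" using t C(1) by (simp add: e_def)
  have near: "p s \<noteq> 0" if s: "s \<in> {0..L}" "\<bar>s - t\<bar> < e" for s
  proof
    assume ps: "p s = 0"
    have "norm (p t) = norm (p s - p t)" using ps by simp
    also have "\<dots> \<le> C * \<bar>s - t\<bar>" using C(2)[OF t(1) s(1)] .
    also have "\<dots> \<le> C * e" using s(2) C(1) by (intro mult_left_mono) auto
    also have "\<dots> < (C + 1) * e" using e by simp
    also have "\<dots> = norm (p t)" using C(1) by (simp add: e_def)
    finally show False by simp
  qed
  show ?thesis
  proof (intro exI[of _ e] conjI ballI impI)
    show "e > 0" by (rule e)
    fix s assume s: "s \<in> {0..L}" "\<bar>s - t\<bar> < e"
    show "p s \<noteq> 0" by (rule near[OF s])
    have sub: "{min s t..max s t} \<subseteq> S"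
    proof
      fix r assume r: "r \<in> {min s t..max s t}"
      then have rL: "r \<in> {0..L}" using s(1) t(1) by auto
      have "\<bar>r - t\<bar> < e" using r s(2) by auto
      then show "r \<in> S" using inS[OF rL near[OF rL]] by simp
    qed
    have "q (max s t) = q (min s t)" by (rule A[OF _ sub]) simp
    then show "q s = q t" by (cases "s \<le> t") (auto simp: max_def min_def)
  qed
qed

lemma ZP_deriv:
  assumes t0: "t0 \<in> {0..L}" "u t0 \<noteq> 0"
  shows "\<exists>a b. a < b \<and> t0 \<in> {a..b} \<and> {a..b} \<subseteq> {0..L} \<and> (t0 < L \<longrightarrow> t0 < b) \<and> (0 < t0 \<longrightarrow> a < t0) \<and>
     (tau has_vector_derivative ((k / norm (u t0)) *\<^sub>R u t0)) (at t0 within {a..b})"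
proof -
  obtain N where N: "negligible N" and g: "\<And>t. t \<in> {0<..<L} \<Longrightarrow> t \<notin> N \<Longrightarrow>
     (tau has_vector_derivative tau' t) (at t) \<and> (u has_vector_derivative u' t) (at t) \<and>
     u' t + (u t \<bullet> tau' t) *\<^sub>R tau t = beta t *\<^sub>R (lam - (lam \<bullet> tau t) *\<^sub>R tau t) \<and>
     norm (u t) *\<^sub>R tau' t = k *\<^sub>R u t"
    using good by blast
  obtain Cu where Cu: "Cu \<ge> 0" "\<And>x y. x \<in> {0..L} \<Longrightarrow> y \<in> {0..L} \<Longrightarrow> norm (u y - u x) \<le> Cu * \<bar>y - x\<bar>"
    using uC by blast
  obtain C where C: "C \<ge> 0" "\<And>x y. x \<in> {0..L} \<Longrightarrow> y \<in> {0..L} \<Longrightarrow> norm (tau y - tau x) \<le> C * \<bar>y - x\<bar>"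
    using tauC by blast
  define d where "d = norm (u t0) / (Cu + 1)"
  have d: "d > 0" using t0 Cu(1) by (simp add: d_def)
  have unz: "u s \<noteq> 0" if s: "s \<in> {0..L}" "\<bar>s - t0\<bar> < d" for s
  proof
    assume us: "u s = 0"
    have "norm (u t0) = norm (u s - u t0)" using us by simp
    also have "\<dots> \<le> Cu * \<bar>s - t0\<bar>" using Cu(2)[OF t0(1) s(1)] .
    also have "\<dots> \<le> Cu * d" using s(2) Cu(1) by (intro mult_left_mono) auto
    also have "\<dots> < (Cu + 1) * d" using d by simp
    also have "\<dots> = norm (u t0)" using Cu(1) by (simp add: d_def)
    finally show False by simp
  qed
  define a where "a = max 0 (t0 - d/2)"
  define b where "b = min L (t0 + d/2)"
  have ab: "a < b" using t0(1) L_pos d by (auto simp: a_def b_def max_def min_def)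
  have t0ab: "t0 \<in> {a..b}" using t0(1) d by (auto simp: a_def b_def)
  have abL: "{a..b} \<subseteq> {0..L}" by (auto simp: a_def b_def)
  have side1: "t0 < L \<longrightarrow> t0 < b" using d by (auto simp: b_def)
  have side2: "0 < t0 \<longrightarrow> a < t0" using d by (auto simp: a_def)
  have unz': "u s \<noteq> 0" if "s \<in> {a..b}" for s
  proof -
    have "\<bar>s - t0\<bar> < d" using that d by (auto simp: a_def b_def abs_if)
    then show ?thesis using unz[of s] that abL by blast
  qed
  define g where "g s = (k / norm (u s)) *\<^sub>R u s" for s
  have ucont: "continuous_on {a..b} u"
  proof -
    obtain C' where "C'-lipschitz_on {0..L} u" using u_lip by blast
    then have "continuous_on {0..L} u" by (rule lipschitz_on_continuous_on)
    then show ?thesis using abL continuous_on_subset by blast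
  qed
  have gcont: "continuous_on {a..b} g"
    unfolding g_def using unz' by (intro continuous_intros ucont) auto
  have "(tau has_vector_derivative g t0) (at t0 within {a..b})"
  proof (rule ftc_ae[OF less_imp_le[OF ab] N _ gcont _ t0ab])
    fix x assume x: "x \<in> {a..b}"
    show "\<exists>B. \<forall>y\<in>{a..b}. norm (tau y - tau x) \<le> B * \<bar>y - x\<bar>"
      using C(2) x abL by blast
  next
    fix t assume t: "t \<in> {a<..<b}" "t \<notin> N"
    have t0L: "t \<in> {0<..<L}" using t(1) abL ab by (auto simp: a_def b_def)
    note gt = g[OF t0L t(2)]
    have ut: "u t \<noteq> 0" using unz' t(1) by auto
    have eq: "norm (u t) *\<^sub>R tau' t = k *\<^sub>R u t" using gt by blast
    have n0: "norm (u t) \<noteq> 0" using ut by simp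
    have "tau' t = (1 / norm (u t)) *\<^sub>R (norm (u t) *\<^sub>R tau' t)" using n0 by simp
    also have "\<dots> = (1 / norm (u t)) *\<^sub>R (k *\<^sub>R u t)" by (simp only: eq)
    finally have "tau' t = (1 / norm (u t)) *\<^sub>R (k *\<^sub>R u t)" .
    then have "tau' t = g t" by (simp add: g_def)
    then show "(tau has_vector_derivative g t) (at t)" using gt by simp
  qed
  then show ?thesis using ab t0ab abL side1 side2 unfolding g_def by blast
qed

lemma ZP_orth:
  assumes ab: "a < b" "t0 \<in> {a..b}" "{a..b} \<subseteq> {0..L}"
    and d: "(tau has_vector_derivative D) (at t0 within {a..b})"
  shows "tau t0 \<bullet> D = 0"
proof -
  have "((\<lambda>s. tau s \<bullet> tau s) has_derivative (\<lambda>h. tau t0 \<bullet> (h *\<^sub>R D) + (h *\<^sub>R D) \<bullet> tau t0)) (at t0 within {a..b})"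
    using has_derivative_inner[OF d[unfolded has_vector_derivative_def] d[unfolded has_vector_derivative_def]] .
  moreover have "(\<lambda>h. tau t0 \<bullet> (h *\<^sub>R D) + (h *\<^sub>R D) \<bullet> tau t0) = (\<lambda>h. h *\<^sub>R (2 * (tau t0 \<bullet> D)))"
    by (rule ext) (simp only: inner_scaleR_right inner_scaleR_left inner_commute[of D "tau t0"] real_scaleR_def mult_2 distrib_left)
  ultimately have d1: "((\<lambda>s. tau s \<bullet> tau s) has_vector_derivative (2 * (tau t0 \<bullet> D))) (at t0 within {a..b})"
    unfolding has_vector_derivative_def by simp
  have d2: "((\<lambda>s. tau s \<bullet> tau s) has_vector_derivative 0) (at t0 within {a..b})"
  proof (rule has_vector_derivative_transform[of t0 "{a..b}" _ "\<lambda>s. 1" 0])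
    show "t0 \<in> {a..b}" by (rule ab(2))
    fix s assume "s \<in> {a..b}"
    then have "norm (tau s) = 1" using tau_sphere ab(3) by auto
    then show "tau s \<bullet> tau s = 1" by (simp add: norm_eq_1)
  next
    show "((\<lambda>s. 1::real) has_vector_derivative 0) (at t0 within {a..b})" by (rule has_vector_derivative_const)
  qed
  have "2 * (tau t0 \<bullet> D) = 0"
  proof -
    have cb: "cbox a b = {a..b}" by simp
    show ?thesis
      using vector_derivative_unique_within_closed_interval[OF ab(1), of t0 "\<lambda>s. tau s \<bullet> tau s" "2 * (tau t0 \<bullet> D)" 0, unfolded cb]
        ab(2) d1 d2 by blast
  qed
  then show ?thesis by simp
qed

lemma ZP:
  assumes t0: "t0 \<in> {0..L}" "p t0 = 0" "u t0 \<noteq> 0"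
  shows "u t0 \<bullet> lam = 0 \<and>
    (\<exists>e>0. \<forall>s\<in>{0..L}. \<bar>s - t0\<bar> < e \<and> s \<noteq> t0 \<longrightarrow> p s \<noteq> 0 \<and> (q s = dir t0 \<or> q s = - dir t0))"
proof -
  obtain a b where ab: "a < b" "t0 \<in> {a..b}" "{a..b} \<subseteq> {0..L}" "t0 < L \<longrightarrow> t0 < b" "0 < t0 \<longrightarrow> a < t0"
    and dt: "(tau has_vector_derivative ((k / norm (u t0)) *\<^sub>R u t0)) (at t0 within {a..b})"
    using ZP_deriv[OF t0(1) t0(3)] by blast
  define g0 where "g0 = (k / norm (u t0)) *\<^sub>R u t0"
  have dt': "(tau has_vector_derivative g0) (at t0 within {a..b})" using dt by (simp only: g0_def)
  have nu: "norm (u t0) > 0" using t0(3) by simp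
  have ng0: "norm g0 = k" using nu k_pos by (simp add: g0_def abs_of_pos)
  have g0nz: "norm g0 \<noteq> 0" using ng0 k_pos by simp
  have orth: "tau t0 \<bullet> g0 = 0" by (rule ZP_orth[OF ab(1,2,3) dt'])
  have tl: "tau t0 = lam \<or> tau t0 = - lam" using p_zero_iff t0(1,2) by blast
  have lg: "lam \<bullet> g0 = 0"
  proof (cases "tau t0 = lam")
    case True then show ?thesis using orth by simp
  next
    case False then have "tau t0 = - lam" using tl by simp
    then show ?thesis using orth by simp
  qed
  have ul: "u t0 \<bullet> lam = 0"
  proof -
    have "(k / norm (u t0)) * (lam \<bullet> u t0) = 0" using lg by (simp add: g0_def)
    moreover have "k / norm (u t0) \<noteq> 0" using k_pos nu by simp
    ultimately show ?thesis by (simp add: inner_commute)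
  qed
  have dp: "(p has_vector_derivative g0) (at t0 within {a..b})"
    using p_deriv[OF dt'] lg by simp
  have dirt0: "dir t0 = g0 /\<^sub>R norm g0"
  proof -
    have "g0 /\<^sub>R norm g0 = (inverse k * (k / norm (u t0))) *\<^sub>R u t0" by (simp only: ng0) (simp add: g0_def)
    also have "inverse k * (k / norm (u t0)) = inverse (norm (u t0))" using k_pos by (simp add: field_simps)
    finally show ?thesis by (simp add: dir_def t0(2))
  qed
  define r where "r s = p s /\<^sub>R (s - t0)" for s
  have evr: "eventually P (at_right t0)" if "b > t0" "\<forall>y>t0. y < b \<longrightarrow> P y" for P b
    using that by (subst eventually_at_right[of t0 b]) auto
  have evl: "eventually P (at_left t0)" if "b < t0" "\<forall>y>b. y < t0 \<longrightarrow> P y" for P b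
    using that by (subst eventually_at_left[of b t0]) auto
  have quot: "(r \<longlongrightarrow> g0) (at t0 within {a..b})"
    using vd_quot[OF dp] t0(2) unfolding r_def by simp
  have lim_n: "((\<lambda>s. r s /\<^sub>R norm (r s)) \<longlongrightarrow> dir t0) F" if rl: "(r \<longlongrightarrow> g0) F" for F
  proof -
    have "((\<lambda>s. inverse (norm (r s)) *\<^sub>R r s) \<longlongrightarrow> inverse (norm g0) *\<^sub>R g0) F"
      by (intro tendsto_scaleR tendsto_inverse tendsto_norm rl g0nz)
    then show ?thesis by (simp add: dirt0)
  qed
  have ev_nz: "eventually (\<lambda>s. p s \<noteq> 0) F" if rl: "(r \<longlongrightarrow> g0) F" for F
  proof -
    have "((\<lambda>s. norm (r s)) \<longlongrightarrow> norm g0) F" by (rule tendsto_norm[OF rl])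
    moreover have "0 < norm g0" using g0nz by simp
    ultimately have "eventually (\<lambda>s. 0 < norm (r s)) F" by (rule order_tendstoD(1))
    then show ?thesis by eventually_elim (auto simp: r_def)
  qed
  have R: "\<exists>e>0. \<forall>s\<in>{0..L}. t0 < s \<and> s < t0 + e \<longrightarrow> p s \<noteq> 0 \<and> q s = dir t0"
  proof (cases "t0 < L")
    case False then show ?thesis using t0(1) by (intro exI[of _ 1]) auto
  next
    case True
    then have tb: "t0 < b" using ab(4) by simp
    have atr: "at t0 within {t0..b} = at_right t0" using at_within_Icc_at_right[OF tb] .
    have "(r \<longlongrightarrow> g0) (at t0 within {t0..b})"
      using tendsto_within_subset[OF quot, of "{t0..b}"] ab(2) by auto
    then have rl: "(r \<longlongrightarrow> g0) (at_right t0)" by (simp only: atr)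
    have eqq: "eventually (\<lambda>s. r s /\<^sub>R norm (r s) = q s) (at_right t0)"
    proof -
      have "\<forall>s>t0. s < t0 + 1 \<longrightarrow> r s /\<^sub>R norm (r s) = q s"
        unfolding r_def q_def using normalize_scale_pos by simp
      then show ?thesis by (intro evr[of "t0 + 1"]) auto
    qed
    have lq2: "(q \<longlongrightarrow> dir t0) (at_right t0)"
      by (rule Lim_transform_eventually[OF lim_n[OF rl] eqq])
    obtain b' where b': "b' > t0" "\<And>y. t0 < y \<Longrightarrow> y < b' \<Longrightarrow> p y \<noteq> 0"
      using ev_nz[OF rl] eventually_at_right[of t0 "t0 + 1"] by auto
    show ?thesis
    proof (intro exI[of _ "b' - t0"] conjI ballI impI)
      show "b' - t0 > 0" using b' by simp
      fix s assume s: "s \<in> {0..L}" "t0 < s \<and> s < t0 + (b' - t0)"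
      show "p s \<noteq> 0" using b'(2) s by auto
      have "\<forall>y>t0. y < s \<longrightarrow> q s = q y"
      proof (intro allI impI)
        fix y assume y: "t0 < y" "y < s"
        have sub: "{y..s} \<subseteq> S"
        proof
          fix z assume z: "z \<in> {y..s}"
          then have zL: "z \<in> {0..L}" using y s t0(1) by auto
          have "p z \<noteq> 0" using b'(2) z y s by auto
          then show "z \<in> S" using inS[OF zL] by simp
        qed
        show "q s = q y" using A[OF _ sub] y by simp
      qed
      then have "eventually (\<lambda>y. q y = q s) (at_right t0)"
        using evr[of s] s by auto
      then have "((\<lambda>y. q s) \<longlongrightarrow> dir t0) (at_right t0)"
        by (rule Lim_transform_eventually[OF lq2])
      then show "q s = dir t0"
        using tendsto_const_iff[OF trivial_limit_at_right_real] by blast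
    qed
  qed
  have Lf: "\<exists>e>0. \<forall>s\<in>{0..L}. t0 - e < s \<and> s < t0 \<longrightarrow> p s \<noteq> 0 \<and> q s = - dir t0"
  proof (cases "0 < t0")
    case False then show ?thesis using t0(1) by (intro exI[of _ 1]) auto
  next
    case True
    then have ta: "a < t0" using ab(5) by simp
    have atl: "at t0 within {a..t0} = at_left t0" using at_within_Icc_at_left[OF ta] .
    have "(r \<longlongrightarrow> g0) (at t0 within {a..t0})"
      using tendsto_within_subset[OF quot, of "{a..t0}"] ab(2) by auto
    then have rl: "(r \<longlongrightarrow> g0) (at_left t0)" by (simp only: atl)
    have eqq: "eventually (\<lambda>s. - (r s /\<^sub>R norm (r s)) = q s) (at_left t0)"
    proof -
      have "\<forall>s>t0 - 1. s < t0 \<longrightarrow> - (r s /\<^sub>R norm (r s)) = q s"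
      proof (intro allI impI)
        fix s assume "s > t0 - 1" "s < t0"
        then have "s - t0 < 0" by simp
        from normalize_scale_neg[OF this, of "p s"] show "- (r s /\<^sub>R norm (r s)) = q s"
          unfolding r_def q_def by simp
      qed
      then show ?thesis by (intro evl[of "t0 - 1"]) auto
    qed
    have lq2: "(q \<longlongrightarrow> - dir t0) (at_left t0)"
      by (rule Lim_transform_eventually[OF tendsto_minus[OF lim_n[OF rl]] eqq])
    obtain b' where b': "b' < t0" "\<And>y. b' < y \<Longrightarrow> y < t0 \<Longrightarrow> p y \<noteq> 0"
      using ev_nz[OF rl] eventually_at_left[of "t0 - 1" t0] by auto
    show ?thesis
    proof (intro exI[of _ "t0 - b'"] conjI ballI impI)
      show "t0 - b' > 0" using b' by simp
      fix s assume s: "s \<in> {0..L}" "t0 - (t0 - b') < s \<and> s < t0"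
      show "p s \<noteq> 0" using b'(2) s by auto
      have "\<forall>y>s. y < t0 \<longrightarrow> q y = q s"
      proof (intro allI impI)
        fix y assume y: "s < y" "y < t0"
        have sub: "{s..y} \<subseteq> S"
        proof
          fix z assume z: "z \<in> {s..y}"
          then have zL: "z \<in> {0..L}" using y s t0(1) by auto
          have "p z \<noteq> 0" using b'(2) z y s by auto
          then show "z \<in> S" using inS[OF zL] by simp
        qed
        show "q y = q s" using A[OF _ sub] y by simp
      qed
      then have "eventually (\<lambda>y. q y = q s) (at_left t0)"
        using evl[of s] s by auto
      then have "((\<lambda>y. q s) \<longlongrightarrow> - dir t0) (at_left t0)"
        by (rule Lim_transform_eventually[OF lq2])
      then show "q s = - dir t0"
        using tendsto_const_iff[OF trivial_limit_at_left_real] by blast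
    qed
  qed
  obtain eR where eR: "eR > 0" "\<And>s. s \<in> {0..L} \<Longrightarrow> t0 < s \<Longrightarrow> s < t0 + eR \<Longrightarrow> p s \<noteq> 0 \<and> q s = dir t0"
    using R by blast
  obtain eL where eL: "eL > 0" "\<And>s. s \<in> {0..L} \<Longrightarrow> t0 - eL < s \<Longrightarrow> s < t0 \<Longrightarrow> p s \<noteq> 0 \<and> q s = - dir t0"
    using Lf by blast
  have "\<forall>s\<in>{0..L}. \<bar>s - t0\<bar> < min eR eL \<and> s \<noteq> t0 \<longrightarrow> p s \<noteq> 0 \<and> (q s = dir t0 \<or> q s = - dir t0)"
  proof (intro ballI impI)
    fix s assume s: "s \<in> {0..L}" "\<bar>s - t0\<bar> < min eR eL \<and> s \<noteq> t0"
    show "p s \<noteq> 0 \<and> (q s = dir t0 \<or> q s = - dir t0)"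
    proof (cases "t0 < s")
      case True then show ?thesis using eR(2)[OF s(1) True] s(2) by auto
    next
      case False then have "s < t0" using s(2) by auto
      then show ?thesis using eL(2)[OF s(1)] s(2) by auto
    qed
  qed
  moreover have "min eR eL > 0" using eR eL by simp
  ultimately show ?thesis using ul by blast
qed

lemma dir_props:
  assumes t: "t \<in> {0..L}" "p t \<noteq> 0 \<or> u t \<noteq> 0"
  shows "norm (dir t) = 1 \<and> dir t \<bullet> lam = 0"
proof (cases "p t = 0")
  case False
  then have "dir t = p t /\<^sub>R norm (p t)" by (simp add: dir_def q_def)
  moreover have "p t \<bullet> lam = 0" by (rule p_orth)
  ultimately show ?thesis using False by simp
next
  case True
  then have ut: "u t \<noteq> 0" using t(2) by simp
  then have "dir t = u t /\<^sub>R norm (u t)" using True by (simp add: dir_def)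
  moreover have "u t \<bullet> lam = 0" using ZP[OF t(1) True ut] by blast
  ultimately show ?thesis using ut by simp
qed

lemma main_loc:
  assumes I: "I \<in> components (S \<union> {t\<in>{0..L}. k * norm (u t) > 0})"
  shows "\<exists>C. great_circle C \<and> lam \<in> C \<and> tau ` I \<subseteq> C"
proof -
  let ?O = "S \<union> {t\<in>{0..L}. k * norm (u t) > 0}"
  have Isub: "I \<subseteq> ?O" using I by (rule in_components_subset)
  have conn: "connected I" using I by (rule in_components_connected)
  have "I \<noteq> {}" using I by (rule in_components_nonempty)
  then obtain t0 where t0: "t0 \<in> I" by blast
  have IL: "t \<in> {0..L}" if "t \<in> I" for t using Isub that S_sub by auto
  have Iu: "u t \<noteq> 0" if "t \<in> I" "p t = 0" for t
  proof -
    have "t \<notin> S" using pnz that(2) by blast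
    then have "k * norm (u t) > 0" using Isub that(1) by auto
    then show ?thesis by auto
  qed
  define D where "D t = {dir t, - dir t}" for t
  have loc: "\<exists>e>0. \<forall>s\<in>I. \<bar>s - t\<bar> < e \<longrightarrow> D s = D t" if tI: "t \<in> I" for t
  proof (cases "p t = 0")
    case False
    obtain e where e: "e > 0" "\<forall>s\<in>{0..L}. \<bar>s - t\<bar> < e \<longrightarrow> p s \<noteq> 0 \<and> q s = q t"
      using NZ[OF IL[OF tI] False] by blast
    show ?thesis
    proof (intro exI[of _ e] conjI ballI impI)
      show "e > 0" by (rule e(1))
      fix s assume s: "s \<in> I" "\<bar>s - t\<bar> < e"
      then have "p s \<noteq> 0 \<and> q s = q t" using e(2) IL by blast
      then show "D s = D t" using False by (simp add: D_def dir_def)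
    qed
  next
    case True
    obtain e where e: "e > 0" "\<forall>s\<in>{0..L}. \<bar>s - t\<bar> < e \<and> s \<noteq> t \<longrightarrow> p s \<noteq> 0 \<and> (q s = dir t \<or> q s = - dir t)"
      using ZP[OF IL[OF tI] True Iu[OF tI True]] by blast
    show ?thesis
    proof (intro exI[of _ e] conjI ballI impI)
      show "e > 0" by (rule e(1))
      fix s assume s: "s \<in> I" "\<bar>s - t\<bar> < e"
      show "D s = D t"
      proof (cases "s = t")
        case True then show ?thesis by simp
      next
        case False
        then have "p s \<noteq> 0 \<and> (q s = dir t \<or> q s = - dir t)" using e(2) IL[OF s(1)] s(2) by blast
        then have "dir s = dir t \<or> dir s = - dir t" by (simp add: dir_def)
        then show ?thesis by (auto simp: D_def)
      qed
    qed
  qed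
  have Dconst: "D t = D t0" if tI: "t \<in> I" for t
  proof (rule connected_induction_simple[OF conn t0 tI, where P = "\<lambda>x. D x = D t0"])
    show "D t0 = D t0" by simp
  next
    fix a assume aI: "a \<in> I"
    obtain e where e: "e > 0" "\<forall>s\<in>I. \<bar>s - a\<bar> < e \<longrightarrow> D s = D a" using loc[OF aI] by blast
    show "\<exists>T. openin (top_of_set I) T \<and> a \<in> T \<and> (\<forall>x\<in>T. \<forall>y\<in>T. D x = D t0 \<longrightarrow> D y = D t0)"
    proof (intro exI[of _ "I \<inter> ball a e"] conjI ballI impI)
      show "openin (top_of_set I) (I \<inter> ball a e)" by (simp add: openin_open_Int)
      show "a \<in> I \<inter> ball a e" using aI e(1) by simp
      fix x y assume x: "x \<in> I \<inter> ball a e" and y: "y \<in> I \<inter> ball a e" and "D x = D t0"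
      have "D x = D a" using e(2) x by (auto simp: dist_real_def abs_minus_commute)
      moreover have "D y = D a" using e(2) y by (auto simp: dist_real_def abs_minus_commute)
      ultimately show "D y = D t0" using \<open>D x = D t0\<close> by simp
    qed
  qed
  define w where "w = dir t0"
  have wprops: "norm w = 1 \<and> w \<bullet> lam = 0"
    unfolding w_def using dir_props[OF IL[OF t0]] Iu[OF t0] by blast
  have dirw: "dir t = w \<or> dir t = - w" if "t \<in> I" for t
  proof -
    have "dir t \<in> D t" unfolding D_def by blast
    then have "dir t \<in> D t0" using Dconst[OF that] by (simp only:)
    then show ?thesis unfolding D_def w_def by blast
  qed
  define V where "V = span {lam, w}"
  have lw: "lam \<noteq> w"
  proof
    assume "lam = w"
    then have "lam \<bullet> lam = 0" using wprops by simp
    then show False using lamlam by simp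
  qed
  have indep: "independent {lam, w}"
  proof (rule pairwise_orthogonal_independent)
    show "pairwise orthogonal {lam, w}"
      using wprops by (simp add: pairwise_insert orthogonal_def inner_commute)
    show "0 \<notin> {lam, w}" using wprops lam_sphere by auto
  qed
  have dimV: "dim V = 2"
    unfolding V_def dim_span using dim_eq_card_independent[OF indep] lw by simp
  have gc: "great_circle (V \<inter> sphere 0 1)"
    unfolding great_circle_def using dimV by (intro exI[of _ V]) (simp add: V_def)
  have lamC: "lam \<in> V \<inter> sphere 0 1"
    using lam_sphere by (simp add: V_def span_base)
  have tauC: "tau ` I \<subseteq> V \<inter> sphere 0 1"
  proof
    fix x assume "x \<in> tau ` I"
    then obtain t where tI: "t \<in> I" and x: "x = tau t" by blast
    have pV: "p t \<in> V"
    proof (cases "p t = 0")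
      case True then show ?thesis by (simp add: V_def span_zero)
    next
      case False
      then have "p t = norm (p t) *\<^sub>R q t" by (simp add: q_def)
      moreover have "q t = w \<or> q t = - w" using dirw[OF tI] False by (simp add: dir_def)
      moreover have "w \<in> V" by (simp add: V_def span_base)
      ultimately show ?thesis
        by (metis V_def span_mul span_neg scaleR_minus_right)
    qed
    have "tau t = p t + (lam \<bullet> tau t) *\<^sub>R lam" by (simp add: p_def)
    moreover have "(lam \<bullet> tau t) *\<^sub>R lam \<in> V" by (simp add: V_def span_base span_mul)
    ultimately have "tau t \<in> V" using pV by (metis V_def span_add)
    moreover have "norm (tau t) = 1" using tau_sphere IL[OF tI] by blast
    ultimately show "x \<in> V \<inter> sphere 0 1" using x by simp
  qed
  show ?thesis using gc lamC tauC by blast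
qed

end

theorem mainTheorem16:
  fixes L k :: real
    and beta :: "real \<Rightarrow> real"
    and tau tau' u u' :: "real \<Rightarrow> real ^ 'n"
    and lam :: "real ^ 'n"
  assumes n2: "CARD('n) \<ge> 2"
    and L_pos: "L > 0"
    and beta_pos: "\<forall>t\<in>{0..L}. beta t > 0"
    and beta_bv: "bounded_variation_on 0 L beta"
    and beta_inv_bdd: "bounded ((\<lambda>t. 1 / beta t) ` {0..L})"
    and tau_lip: "\<exists>C. lipschitz_on C {0..L} tau"
    and tau_sphere: "\<forall>t\<in>{0..L}. norm (tau t) = 1"
    and tau_deriv: "AE t in lebesgue. t \<in> {0<..<L} \<longrightarrow> (tau has_vector_derivative tau' t) (at t)"
    and k_def: "esssup (lebesgue_on {0<..<L}) (\<lambda>t. ereal (norm (tau' t))) = ereal k"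
    and k_pos: "k > 0"
    and lam_sphere: "norm lam = 1"
    and u_lip: "\<exists>C. lipschitz_on C {0..L} u"
    and u_nonzero: "\<exists>t\<in>{0..L}. u t \<noteq> 0"
    and u_deriv: "AE t in lebesgue. t \<in> {0<..<L} \<longrightarrow> (u has_vector_derivative u' t) (at t)"
    and ode1: "AE t in lebesgue. t \<in> {0<..<L} \<longrightarrow>
                 u' t + (u t \<bullet> tau' t) *\<^sub>R tau t = beta t *\<^sub>R (lam - (lam \<bullet> tau t) *\<^sub>R tau t)"
    and ode2: "AE t in lebesgue. t \<in> {0<..<L} \<longrightarrow> norm (u t) *\<^sub>R tau' t = k *\<^sub>R u t"
    and dep: "\<forall>t\<in>{t\<in>{0..L}. k * norm (u t) > 0}. lin_dep3 (tau t) (tau' t) lam"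
  shows "\<forall>I\<in>components ({t\<in>{0..L}. tau t \<noteq> lam \<and> tau t \<noteq> - lam} \<union> {t\<in>{0..L}. k * norm (u t) > 0}).
           \<exists>C. great_circle C \<and> lam \<in> C \<and> tau ` I \<subseteq> C"
proof -
  interpret curve L k beta tau tau' u u' lam
    using L_pos beta_pos tau_lip tau_sphere tau_deriv k_pos lam_sphere u_lip u_deriv ode1 ode2 dep
    by unfold_locales
  have eq: "S = {t\<in>{0..L}. tau t \<noteq> lam \<and> tau t \<noteq> - lam}" by (simp add: S_def)
  show ?thesis using main_loc unfolding eq by blast
qed

end
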